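(* Let $X$ be a compact Hausdorff topological space. Then $H_n^M(X)=0$ for all $n>0$.
   Context: A continuous multivalued map $X\to Y$ is a subset $T\subset X\times Y$ such that the restriction of the projection $X\times Y\to X$ to $T$ is proper (universally closed; equivalently closed with compact fibers), surjective and has finite fibers; $M(X,Y)$ is the set of these. For $\alpha\in M(\Delta_n,X)$ and a continuous map $f:\Delta_{n-1}\to\Delta_n$, $\alpha\circ\mathrm{gr}(f)=\{(s,x)\in\Delta_{n-1}\times X:(f(s),x)\in\alpha\}$. Let $\Delta_n=\{(t_0,\dots,t_n)\in\mathbb{R}^{n+1}: t_i\ge 0,\ \sum t_i=1\}$ and $\delta^n_i:\Delta_{n-1}\to\Delta_n$, $\delta^n_i(t_0,\dots,t_{n-1})=(t_0,\dots,t_{i-1},0,t_i,\dots,t_{n-1})$ for $0\le i\le n$. Set $S_n^M(X)=M(\Delta_n,X)$, $d^i_n(\alpha)=\alpha\circ\mathrm{gr}(\delta^n_i)$, let $C_n^M(X)$ be the free abelian group with basis $S_n^M(X)$ and differential $d_n=\sum_{i=0}^n(-1)^i d^i_n$, and define the multivalued singular homology $H_n^M(X)=H_n(C_*^M(X),d_* )$. *)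

theory Defs
  imports "HOL-Homology.Homology"
begin

definition simplex_top :: "nat \<Rightarrow> (nat \<Rightarrow> real) topology" where
  "simplex_top n = subtopology (powertop_real UNIV) (standard_simplex n)"

text \<open>Continuous multivalued maps X -> Y: subsets T of X x Y such that the projection
  T -> X is proper, surjective and has finite fibres.\<close>
definition mv_map :: "'a topology \<Rightarrow> 'b topology \<Rightarrow> ('a \<times> 'b) set \<Rightarrow> bool" where
  "mv_map X Y T \<longleftrightarrow>
     T \<subseteq> topspace X \<times> topspace Y
   \<and> proper_map (subtopology (prod_topology X Y) T) X fst
   \<and> fst ` T = topspace X
   \<and> (\<forall>x\<in>topspace X. finite {y. (x, y) \<in> T})"

definition mv_simplex_set :: "nat \<Rightarrow> 'a topology \<Rightarrow> ((nat \<Rightarrow> real) \<times> 'a) set set" where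
  "mv_simplex_set n X = {\<alpha>. mv_map (simplex_top n) X \<alpha>}"

text \<open>d^i_n(alpha) = alpha o gr(delta^n_i), with delta^n_i = simplical_face i.\<close>
definition mv_face :: "nat \<Rightarrow> nat \<Rightarrow> ((nat \<Rightarrow> real) \<times> 'a) set \<Rightarrow> ((nat \<Rightarrow> real) \<times> 'a) set" where
  "mv_face n i \<alpha> = {(s, x). s \<in> standard_simplex (n - 1) \<and> (simplical_face i s, x) \<in> \<alpha>}"

definition mv_chain_group :: "nat \<Rightarrow> 'a topology \<Rightarrow> (((nat \<Rightarrow> real) \<times> 'a) set \<Rightarrow>\<^sub>0 int) monoid" where
  "mv_chain_group n X = free_Abelian_group (mv_simplex_set n X)"

definition mv_boundary :: "nat \<Rightarrow> (((nat \<Rightarrow> real) \<times> 'a) set \<Rightarrow>\<^sub>0 int) \<Rightarrow> (((nat \<Rightarrow> real) \<times> 'a) set \<Rightarrow>\<^sub>0 int)" where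
  "mv_boundary n c = frag_extend (\<lambda>\<alpha>. \<Sum>i\<le>n. frag_cmul ((-1) ^ i) (frag_of (mv_face n i \<alpha>))) c"

definition mv_cycle_group :: "nat \<Rightarrow> 'a topology \<Rightarrow> (((nat \<Rightarrow> real) \<times> 'a) set \<Rightarrow>\<^sub>0 int) monoid" where
  "mv_cycle_group n X = subgroup_generated (mv_chain_group n X)
      {c \<in> carrier (mv_chain_group n X). mv_boundary n c = 0}"

definition mv_homology_group :: "nat \<Rightarrow> 'a topology \<Rightarrow> (((nat \<Rightarrow> real) \<times> 'a) set \<Rightarrow>\<^sub>0 int) set monoid" where
  "mv_homology_group n X = mv_cycle_group n X Mod (mv_boundary (Suc n) ` carrier (mv_chain_group (Suc n) X))"

end

theory Submission
  imports Defs "HOL-Analysis.Abstract_Topological_Spaces"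
begin

definition proj :: "(nat \<Rightarrow> real) \<Rightarrow> (nat \<Rightarrow> real)" where
  "proj t = (\<lambda>i. t (Suc i) / (1 - t 0))"

definition Dm :: "nat \<Rightarrow> 'a \<Rightarrow> ((nat\<Rightarrow>real)\<times>'a) set \<Rightarrow> ((nat\<Rightarrow>real)\<times>'a) set" where
  "Dm n x0 \<alpha> = {(t,x). t \<in> standard_simplex (Suc n) \<and> t 0 \<le> 1/2 \<and> (proj t, x) \<in> \<alpha>}
     \<union> {(t,x). t \<in> standard_simplex (Suc n) \<and> 1/2 \<le> t 0 \<and> x = x0}"

lemma proj_in:
  assumes t: "t \<in> standard_simplex (Suc n)" and lt: "t 0 < 1"
  shows "proj t \<in> standard_simplex n"
proof -
  have t0: "\<And>i. 0 \<le> t i" "\<And>i. i > Suc n \<Longrightarrow> t i = 0" and s: "sum t {..Suc n} = 1"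
    using t by (auto simp: standard_simplex_def)
  have s2: "(\<Sum>i\<le>n. t (Suc i)) = 1 - t 0"
    using s unfolding sum.atMost_Suc_shift by simp
  have le: "t (Suc i) \<le> 1 - t 0" if "i \<le> n" for i
  proof -
    have "t (Suc i) \<le> (\<Sum>j\<le>n. t (Suc j))"
      using that t0 by (intro member_le_sum) auto
    then show ?thesis using s2 by simp
  qed
  have pos: "1 - t 0 > 0" using lt by simp
  show ?thesis
    unfolding standard_simplex_def proj_def
  proof (intro CollectI conjI allI impI)
    fix i
    show "0 \<le> t (Suc i) / (1 - t 0)" using t0 pos by simp
    show "t (Suc i) / (1 - t 0) \<le> 1"
    proof (cases "i \<le> n")
      case True then show ?thesis using le pos by simp
    next
      case False then show ?thesis using t0 pos by simp
    qed
  next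
    fix i assume "n < i" then show "t (Suc i) / (1 - t 0) = 0" using t0 by simp
  next
    show "(\<Sum>i\<le>n. t (Suc i) / (1 - t 0)) = 1"
      using s2 pos by (simp add: sum_divide_distrib[symmetric])
  qed
qed

lemma proj_face0: "proj (simplical_face 0 s) = s"
  by (simp add: proj_def simplical_face_def)

lemma proj_faceS: "s 0 \<noteq> 1 \<Longrightarrow> proj (simplical_face (Suc k) s) = simplical_face k (proj s)"
  by (auto simp: proj_def simplical_face_def fun_eq_iff)

lemma face0_0: "simplical_face 0 s 0 = 0" by (simp add: simplical_face_def)
lemma faceS_0: "simplical_face (Suc k) s 0 = s 0" by (simp add: simplical_face_def)

lemma Dm_face0:
  assumes "\<alpha> \<subseteq> standard_simplex n \<times> UNIV"
  shows "mv_face (Suc n) 0 (Dm n x0 \<alpha>) = \<alpha>"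
  using assms
  by (auto simp: mv_face_def Dm_def face0_0 proj_face0 simplical_face_in_standard_simplex)

lemma Dm_faceS:
  assumes "n \<ge> 1" "k \<le> n"
  shows "mv_face (Suc n) (Suc k) (Dm n x0 \<alpha>) = Dm (n-1) x0 (mv_face n k \<alpha>)"
proof -
  have in1: "simplical_face (Suc k) s \<in> standard_simplex (Suc n)" if "s \<in> standard_simplex n" for s
    using that assms simplical_face_in_standard_simplex[of "Suc n" "Suc k" s] by auto
  have pin: "proj s \<in> standard_simplex (n-1)" if "s \<in> standard_simplex n" "s 0 \<le> 1/2" for s
    using proj_in[of s "n-1"] that assms by auto
  have sn: "Suc (n - 1) = n" "Suc (n - Suc 0) = n" using assms by simp_all
  have pin': "proj s \<in> standard_simplex (n - Suc 0)" if "s \<in> standard_simplex n" "s 0 \<le> 1/2" for s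
    using pin[OF that] by simp
  have key: "(s,x) \<in> mv_face (Suc n) (Suc k) (Dm n x0 \<alpha>) \<longleftrightarrow> (s,x) \<in> Dm (n-1) x0 (mv_face n k \<alpha>)" for s x
    proof (cases "s \<in> standard_simplex n \<and> s 0 \<le> 1/2")
      case True
      then have "s 0 \<noteq> 1" by auto
      then show ?thesis using True by (auto simp: mv_face_def Dm_def faceS_0 in1 pin pin' proj_faceS sn)
    next
      case False
      then show ?thesis by (auto simp: mv_face_def Dm_def faceS_0 in1 sn)
    qed
  show ?thesis by (simp add: set_eq_iff key split_paired_All)
qed

definition Dl :: "nat \<Rightarrow> 'a \<Rightarrow> (((nat \<Rightarrow> real) \<times> 'a) set \<Rightarrow>\<^sub>0 int) \<Rightarrow> (((nat \<Rightarrow> real) \<times> 'a) set \<Rightarrow>\<^sub>0 int)" where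
  "Dl n x0 c = frag_extend (\<lambda>\<alpha>. frag_of (Dm n x0 \<alpha>)) c"

lemma frag_cmul_uminus: "frag_cmul (- c) x = - frag_cmul c x"
  by (metis frag_cmul_cmul frag_cmul_minus_one mult_minus1)

lemma bd_Dm_single:
  assumes "n \<ge> 1" "\<alpha> \<subseteq> standard_simplex n \<times> UNIV"
  shows "mv_boundary (Suc n) (frag_of (Dm n x0 \<alpha>)) = frag_of \<alpha> - Dl (n-1) x0 (mv_boundary n (frag_of \<alpha>))"
proof -
  have "mv_boundary (Suc n) (frag_of (Dm n x0 \<alpha>))
     = (\<Sum>i\<le>Suc n. frag_cmul ((-1) ^ i) (frag_of (mv_face (Suc n) i (Dm n x0 \<alpha>))))"
    by (simp add: mv_boundary_def)
  also have "\<dots> = frag_of \<alpha> + (\<Sum>k\<le>n. frag_cmul ((-1) ^ Suc k) (frag_of (Dm (n-1) x0 (mv_face n k \<alpha>))))"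
    unfolding sum.atMost_Suc_shift using assms by (simp add: Dm_face0 Dm_faceS)
  also have "\<dots> = frag_of \<alpha> - (\<Sum>k\<le>n. frag_cmul ((-1) ^ k) (frag_of (Dm (n-1) x0 (mv_face n k \<alpha>))))"
  proof -
    have e: "frag_cmul ((-1) ^ Suc k) y = - frag_cmul ((-1) ^ k) y" for k and y :: "(((nat \<Rightarrow> real) \<times> 'a) set \<Rightarrow>\<^sub>0 int)"
    proof -
      have "(-1::int) ^ Suc k = - ((-1) ^ k)" by simp
      then show ?thesis by (simp only: frag_cmul_uminus)
    qed
    show ?thesis by (simp only: e sum_negf diff_conv_add_uminus)
  qed
  also have "(\<Sum>k\<le>n. frag_cmul ((-1) ^ k) (frag_of (Dm (n-1) x0 (mv_face n k \<alpha>)))) = Dl (n-1) x0 (mv_boundary n (frag_of \<alpha>))"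
    by (simp add: Dl_def mv_boundary_def frag_extend_sum frag_extend_cmul o_def)
  finally show ?thesis .
qed

lemma bd_Dl:
  assumes "n \<ge> 1" "Poly_Mapping.keys c \<subseteq> {\<alpha>. \<alpha> \<subseteq> standard_simplex n \<times> UNIV}"
  shows "mv_boundary (Suc n) (Dl n x0 c) = c - Dl (n-1) x0 (mv_boundary n c)"
  using assms(2)
proof (induction c rule: frag_induction)
  case zero
  then show ?case by (simp add: Dl_def mv_boundary_def)
next
  case (one x)
  then show ?case using bd_Dm_single[OF assms(1)] by (simp add: Dl_def)
next
  case (diff a b)
  have l1: "Dl k x0 (a - b) = Dl k x0 a - Dl k x0 b" for k and a b :: "(((nat \<Rightarrow> real) \<times> 'a) set \<Rightarrow>\<^sub>0 int)"
    unfolding Dl_def by (rule frag_extend_diff)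
  have l2: "mv_boundary k (a - b) = mv_boundary k a - mv_boundary k b" for k and a b :: "(((nat \<Rightarrow> real) \<times> 'a) set \<Rightarrow>\<^sub>0 int)"
    unfolding mv_boundary_def by (rule frag_extend_diff)
  show ?case unfolding l1 l2 diff.IH by (simp add: algebra_simps)
qed


lemma topspace_simplex_top [simp]: "topspace (simplex_top m) = standard_simplex m"
  by (simp add: simplex_top_def)

lemma compact_simplex_top: "compact_space (simplex_top m)"
  unfolding simplex_top_def by (rule compact_space_subtopology[OF compactin_standard_simplex])

lemma Hausdorff_simplex_top: "Hausdorff_space (simplex_top m)"
  unfolding simplex_top_def
  by (rule Hausdorff_space_subtopology) (metis Hausdorff_space_euclidean Hausdorff_space_product_topology)

lemma coord_cont: "continuous_map (simplex_top m) euclideanreal (\<lambda>t. t j)"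
  unfolding simplex_top_def
  by (rule continuous_map_from_subtopology[OF continuous_map_product_projection]) simp

lemma coord_cont2: "continuous_map (prod_topology (simplex_top m) X) euclideanreal (\<lambda>p. fst p j)"
  using continuous_map_compose[OF continuous_map_fst coord_cont] by (simp add: o_def)

lemma cont_into_simplex:
  "continuous_map Z (simplex_top n) f \<longleftrightarrow> continuous_map Z (powertop_real UNIV) f \<and> f \<in> topspace Z \<rightarrow> standard_simplex n"
  by (simp add: simplex_top_def continuous_map_in_subtopology)

lemma mv_map_closed:
  assumes H: "Hausdorff_space X" and a: "mv_map (simplex_top n) X \<alpha>"
  shows "closedin (prod_topology (simplex_top n) X) \<alpha>"
proof -
  let ?P = "prod_topology (simplex_top n) X"
  have sub: "\<alpha> \<subseteq> topspace ?P" and pr: "proper_map (subtopology ?P \<alpha>) (simplex_top n) fst"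
    and im: "fst ` \<alpha> = standard_simplex n"
    using a by (auto simp: mv_map_def)
  have ts: "topspace (subtopology ?P \<alpha>) = \<alpha>" using sub by auto
  have "compact_space (subtopology ?P \<alpha>)"
    by (rule compact_space_proper_map_preimage[OF pr]) (use im ts compact_simplex_top in auto)
  then have "compactin ?P \<alpha>" using sub by (simp add: compactin_subspace)
  moreover have "Hausdorff_space ?P"
    using H Hausdorff_simplex_top by (simp add: Hausdorff_space_prod_topology)
  ultimately show ?thesis by (simp add: compactin_imp_closedin)
qed

lemma Dm_mv:
  assumes C: "compact_space X" and H: "Hausdorff_space X" and x0: "x0 \<in> topspace X"
    and a: "mv_map (simplex_top n) X \<alpha>"
  shows "mv_map (simplex_top (Suc n)) X (Dm n x0 \<alpha>)"
proof -
  let ?P = "prod_topology (simplex_top n) X"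
  let ?P' = "prod_topology (simplex_top (Suc n)) X"
  have sub: "\<alpha> \<subseteq> standard_simplex n \<times> topspace X"
    and im: "fst ` \<alpha> = standard_simplex n"
    and fin: "\<And>s. s \<in> standard_simplex n \<Longrightarrow> finite {y. (s, y) \<in> \<alpha>}"
    using a by (auto simp: mv_map_def)
  have cla: "closedin ?P \<alpha>" by (rule mv_map_closed[OF H a])
  have pin: "proj t \<in> standard_simplex n" if "t \<in> standard_simplex (Suc n)" "t 0 \<le> 1/2" for t
    using proj_in[OF that(1)] that(2) by simp
  have subD: "Dm n x0 \<alpha> \<subseteq> standard_simplex (Suc n) \<times> topspace X"
    using sub x0 by (auto simp: Dm_def)
  have imD: "fst ` Dm n x0 \<alpha> = standard_simplex (Suc n)"
  proof
    show "fst ` Dm n x0 \<alpha> \<subseteq> standard_simplex (Suc n)" using subD by auto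
  next
    show "standard_simplex (Suc n) \<subseteq> fst ` Dm n x0 \<alpha>"
    proof
      fix t assume t: "t \<in> standard_simplex (Suc n)"
      show "t \<in> fst ` Dm n x0 \<alpha>"
      proof (cases "t 0 \<le> 1/2")
        case True
        then have "proj t \<in> fst ` \<alpha>" using pin[OF t] im by simp
        then obtain x where "(proj t, x) \<in> \<alpha>" by force
        then have "(t, x) \<in> Dm n x0 \<alpha>" using t True by (simp add: Dm_def)
        then show ?thesis by force
      next
        case False
        then have "(t, x0) \<in> Dm n x0 \<alpha>" using t by (simp add: Dm_def)
        then show ?thesis by force
      qed
    qed
  qed
  have finD: "finite {y. (t, y) \<in> Dm n x0 \<alpha>}" if t: "t \<in> standard_simplex (Suc n)" for t
  proof (cases "t 0 \<le> 1/2")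
    case True
    have "{y. (t, y) \<in> Dm n x0 \<alpha>} \<subseteq> {y. (proj t, y) \<in> \<alpha>} \<union> {x0}"
      by (auto simp: Dm_def)
    then show ?thesis using fin[OF pin[OF t True]] finite_subset by blast
  next
    case False
    have "{y. (t, y) \<in> Dm n x0 \<alpha>} \<subseteq> {x0}"
      using False by (auto simp: Dm_def)
    then show ?thesis using finite_subset by blast
  qed
  let ?L = "{p \<in> topspace ?P'. fst p 0 \<in> {..1/2}}"
  let ?Q = "subtopology ?P' ?L"
  have clL: "closedin ?P' ?L"
    by (rule closedin_continuous_map_preimage[OF coord_cont2]) simp
  have ci: "continuous_map ?Q euclideanreal (\<lambda>x. fst x (Suc i) / (1 - fst x 0))" for i
    by (intro continuous_map_real_divide continuous_map_from_subtopology coord_cont2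
              continuous_map_diff continuous_map_const[THEN iffD2]) auto
  have g1: "continuous_map ?Q (simplex_top n) (\<lambda>p. proj (fst p))"
    unfolding cont_into_simplex
    using ci pin by (auto simp: continuous_map_componentwise_UNIV proj_def[abs_def])
  have g: "continuous_map ?Q ?P (\<lambda>p. (proj (fst p), snd p))"
    by (intro continuous_map_pairedI g1 continuous_map_from_subtopology continuous_map_snd)
  have "closedin ?Q {p \<in> topspace ?Q. (proj (fst p), snd p) \<in> \<alpha>}"
    by (rule closedin_continuous_map_preimage[OF g cla])
  then have clA: "closedin ?P' {p \<in> topspace ?Q. (proj (fst p), snd p) \<in> \<alpha>}"
    using clL closedin_trans_full by blast
  have eqA: "{p \<in> topspace ?Q. (proj (fst p), snd p) \<in> \<alpha>}
      = {(t,x). t \<in> standard_simplex (Suc n) \<and> t 0 \<le> 1/2 \<and> (proj t, x) \<in> \<alpha>}"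
    using sub by auto
  have clB0: "closedin (simplex_top (Suc n)) {t \<in> topspace (simplex_top (Suc n)). t 0 \<in> {1/2..}}"
    by (rule closedin_continuous_map_preimage[OF coord_cont]) simp
  have clB: "closedin ?P' ({t \<in> topspace (simplex_top (Suc n)). t 0 \<in> {1/2..}} \<times> {x0})"
    using clB0 closedin_Hausdorff_singleton[OF H x0] by (simp add: closedin_prod_Times_iff)
  have eqD: "Dm n x0 \<alpha> = {p \<in> topspace ?Q. (proj (fst p), snd p) \<in> \<alpha>}
        \<union> ({t \<in> topspace (simplex_top (Suc n)). t 0 \<in> {1/2..}} \<times> {x0})"
    unfolding eqA by (auto simp: Dm_def)
  have clD: "closedin ?P' (Dm n x0 \<alpha>)"
    unfolding eqD using clA clB by blast
  have cP': "compact_space ?P'"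
    using C compact_simplex_top by (simp add: compact_space_prod_topology)
  have "compactin ?P' (Dm n x0 \<alpha>)" by (rule closedin_compact_space[OF cP' clD])
  then have cs: "compact_space (subtopology ?P' (Dm n x0 \<alpha>))"
    by (simp add: compactin_subspace)
  have pr: "proper_map (subtopology ?P' (Dm n x0 \<alpha>)) (simplex_top (Suc n)) fst"
    by (rule continuous_imp_proper_map[OF cs Hausdorff_imp_kc_space[OF Hausdorff_simplex_top]])
       (intro continuous_map_from_subtopology continuous_map_fst)
  show ?thesis
    unfolding mv_map_def using subD imD finD pr by auto
qed


lemma trivial_quot:
  fixes G :: "('x::ab_group_add) monoid"
  assumes mG: "\<And>a b. a \<otimes>\<^bsub>G\<^esub> b = a + b" and sub: "carrier G \<subseteq> H" and z: "0 \<in> carrier G"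
    and add: "\<And>a b. a \<in> H \<Longrightarrow> b \<in> H \<Longrightarrow> a + b \<in> H"
    and neg: "\<And>a. a \<in> H \<Longrightarrow> - a \<in> H"
  shows "trivial_group (G Mod H)"
proof -
  have H0: "0 \<in> H" using sub z by auto
  have rc: "H #>\<^bsub>G\<^esub> g = H" if "g \<in> H" for g
  proof
    show "H #>\<^bsub>G\<^esub> g \<subseteq> H" using that add by (auto simp: r_coset_def mG)
    show "H \<subseteq> H #>\<^bsub>G\<^esub> g"
    proof
      fix h assume h: "h \<in> H"
      have "h - g \<in> H" using add[OF h neg[OF that]] by simp
      moreover have "h = (h - g) + g" by simp
      ultimately show "h \<in> H #>\<^bsub>G\<^esub> g" unfolding r_coset_def mG by blast
    qed
  qed
  have car: "carrier (G Mod H) = {H}"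
    using rc sub z by (auto simp: FactGroup_def RCOSETS_def)
  have one: "one (G Mod H) = H" by (simp add: FactGroup_def)
  have mm: "H \<otimes>\<^bsub>G Mod H\<^esub> H = H"
  proof -
    have "H \<otimes>\<^bsub>G Mod H\<^esub> H = H <#>\<^bsub>G\<^esub> H" by (simp add: FactGroup_def)
    also have "\<dots> = H"
    proof
      show "H <#>\<^bsub>G\<^esub> H \<subseteq> H" using add by (auto simp: set_mult_def mG)
      show "H \<subseteq> H <#>\<^bsub>G\<^esub> H"
      proof
        fix h assume "h \<in> H"
        then show "h \<in> H <#>\<^bsub>G\<^esub> H" using H0 unfolding set_mult_def mG by force
      qed
    qed
    finally show ?thesis .
  qed
  have "group (G Mod H)"
    by (rule groupI) (use car one mm in auto)
  then show ?thesis unfolding trivial_group_def using car one by simp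
qed

lemma cycles_prop:
  assumes "z \<in> carrier (mv_cycle_group n X)"
  shows "z \<in> carrier (mv_chain_group n X) \<and> mv_boundary n z = 0"
proof -
  have lin_add: "mv_boundary n (a + b) = mv_boundary n a + mv_boundary n b" for a b
    unfolding mv_boundary_def by (rule frag_extend_add)
  have lin_neg: "mv_boundary n (- a) = - mv_boundary n a" for a
    unfolding mv_boundary_def by (rule frag_extend_minus)
  have "z \<in> generate (mv_chain_group n X)
      (carrier (mv_chain_group n X) \<inter> {c \<in> carrier (mv_chain_group n X). mv_boundary n c = 0})"
    using assms by (simp add: mv_cycle_group_def carrier_subgroup_generated)
  then show ?thesis
  proof (induction rule: generate.induct)
    case one
    then show ?case by (simp add: mv_chain_group_def mv_boundary_def)
  next
    case (incl h)
    then show ?case by simp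
  next
    case (inv h)
    then show ?case by (auto simp: mv_chain_group_def lin_neg)
  next
    case (eng h1 h2)
    then show ?case using keys_add[of h1 h2] by (auto simp: mv_chain_group_def lin_add)
  qed
qed

theorem mainTheorem6:
  fixes X :: "'a topology" and n :: nat
  assumes "compact_space X" and "Hausdorff_space X" and "n > 0"
  shows "trivial_group (mv_homology_group n X)"
proof -
  let ?G = "mv_cycle_group n X"
  let ?H = "mv_boundary (Suc n) ` carrier (mv_chain_group (Suc n) X)"
  have lin_add: "mv_boundary k (a + b) = mv_boundary k a + mv_boundary k b" for k a b
    unfolding mv_boundary_def by (rule frag_extend_add)
  have lin_neg: "mv_boundary k (- a) = - mv_boundary k a" for k a
    unfolding mv_boundary_def by (rule frag_extend_minus)
  have mG: "a \<otimes>\<^bsub>?G\<^esub> b = a + b" for a b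
    by (simp add: mv_cycle_group_def mv_chain_group_def)
  have z: "0 \<in> carrier ?G"
    by (simp add: mv_cycle_group_def carrier_subgroup_generated generate.one[where G="mv_chain_group n X", simplified mv_chain_group_def one_free_Abelian_group, folded mv_chain_group_def])
  have add: "a + b \<in> ?H" if aH: "a \<in> ?H" and bH: "b \<in> ?H" for a b
  proof -
    obtain c where "c \<in> carrier (mv_chain_group (Suc n) X)" "a = mv_boundary (Suc n) c"
      using aH by blast
    moreover obtain d where "d \<in> carrier (mv_chain_group (Suc n) X)" "b = mv_boundary (Suc n) d"
      using bH by blast
    ultimately show ?thesis using keys_add[of c d]
      by (intro image_eqI[where x="c + d"]) (auto simp: lin_add mv_chain_group_def)
  qed
  have neg: "- a \<in> ?H" if aH: "a \<in> ?H" for a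
  proof -
    obtain c where "c \<in> carrier (mv_chain_group (Suc n) X)" "a = mv_boundary (Suc n) c"
      using aH by blast
    then show ?thesis
      by (intro image_eqI[where x="- c"]) (auto simp: lin_neg mv_chain_group_def)
  qed
  have sub: "carrier ?G \<subseteq> ?H"
  proof
    fix zz assume zz: "zz \<in> carrier ?G"
    have zc: "Poly_Mapping.keys zz \<subseteq> mv_simplex_set n X" and dz: "mv_boundary n zz = 0"
      using cycles_prop[OF zz] by (auto simp: mv_chain_group_def)
    show "zz \<in> ?H"
    proof (cases "zz = 0")
      case True
      then show ?thesis
        by (intro image_eqI[where x=0]) (auto simp: mv_boundary_def mv_chain_group_def)
    next
      case False
      then obtain \<alpha> where "\<alpha> \<in> Poly_Mapping.keys zz" by fastforce
      then have am: "mv_map (simplex_top n) X \<alpha>" using zc by (auto simp: mv_simplex_set_def)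
      then have "fst ` \<alpha> = standard_simplex n" "\<alpha> \<subseteq> standard_simplex n \<times> topspace X"
        by (auto simp: mv_map_def)
      then obtain x0 where x0: "x0 \<in> topspace X"
        using nonempty_standard_simplex by fastforce
      have keysD: "Poly_Mapping.keys (Dl n x0 zz) \<subseteq> mv_simplex_set (Suc n) X"
      proof -
        have "Poly_Mapping.keys (Dl n x0 zz) \<subseteq> (\<Union>x \<in> Poly_Mapping.keys zz. Poly_Mapping.keys (frag_of (Dm n x0 x)))"
          unfolding Dl_def by (rule keys_frag_extend)
        also have "\<dots> \<subseteq> mv_simplex_set (Suc n) X"
          using zc Dm_mv[OF assms(1,2) x0] by (auto simp: mv_simplex_set_def)
        finally show ?thesis .
      qed
      have ks: "Poly_Mapping.keys zz \<subseteq> {\<alpha>. \<alpha> \<subseteq> standard_simplex n \<times> UNIV}"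
        using zc by (auto simp: mv_simplex_set_def mv_map_def)
      have "mv_boundary (Suc n) (Dl n x0 zz) = zz"
        using bd_Dl[OF _ ks, of x0] assms(3) dz by (simp add: Dl_def)
      then show ?thesis
        using keysD by (intro image_eqI[where x="Dl n x0 zz"]) (auto simp: mv_chain_group_def)
    qed
  qed
  show ?thesis
    unfolding mv_homology_group_def
    by (rule trivial_quot[OF mG sub z add neg])
qed

end
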